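(* Let $n\ge1$ and $A\in\mathbb{R}^{n\times n}$. (i) If $A=B+C$ for some weakly algebraically independent $B,C\in\mathbb{R}^{n\times n}$, then $A$ is transcendental. (ii) If $A$ is not weakly algebraic, then there exist weakly algebraically independent $B,C\in\mathscr{L}_{n,n}$ with $B+C=A$.
   Context: Polynomials in several non-commuting variables with integer coefficients ($\mathbb{Z}\langle X_0,\ldots,X_\ell\rangle$) are evaluated at real $n\times n$ matrices by substitution (constant term times $I_n$). $A$ is algebraic if $P(A)=\mathbf{0}$ for some nonzero $P\in\mathbb{Z}[X]$, and transcendental otherwise. $A$ is weakly algebraic if there exist an integer $\ell\ge0$ and $P\in\mathbb{Z}\langle X_0,\ldots,X_\ell\rangle$ such that $P(A,B_1,\ldots,B_\ell)=\mathbf{0}$ for all $B_1,\ldots,B_\ell\in\mathbb{R}^{n\times n}$, but $P(C_0,\ldots,C_\ell)\ne\mathbf{0}$ for some $C_0,\ldots,C_\ell\in\mathbb{R}^{n\times n}$. $B,C$ are weakly algebraically independent if every $P\in\mathbb{Z}\langle X,Y\rangle$ with $P(B,C)=\mathbf{0}$ satisfies $P(C_0,C_1)=\mathbf{0}$ for all $C_0,C_1\in\mathbb{R}^{n\times n}$. $\Vert\cdot\Vert$ is the supremum norm; a real $m\times n$ matrix $A$ is a Liouville matrix if $A\mathbf{q}-\mathbf{p}\neq\mathbf{0}$ for all nonzero $(\mathbf{q},\mathbf{p})\in\mathbb{Z}^n\times\mathbb{Z}^m$ and for every $N$ there exist $\mathbf{p}\in\mathbb{Z}^m$, $\mathbf{q}\in\mathbb{Z}^n\setminus\{\mathbf{0}\}$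 with $\Vert A\mathbf{q}-\mathbf{p}\Vert<\Vert\mathbf{q}\Vert^{-N}$; $\mathscr{L}_{m,n}$ is the set of these. *)

theory Defs
  imports "HOL-Analysis.Analysis" "HOL-Computational_Algebra.Polynomial"
begin

text \<open>Non-commutative polynomials with integer coefficients, represented as
  expressions (every such polynomial is denoted by some expression and vice versa).\<close>

datatype ncpoly = NVar nat | NConst int | NAdd ncpoly ncpoly | NMul ncpoly ncpoly

fun ncvars :: "ncpoly \<Rightarrow> nat set" where
  "ncvars (NVar i) = {i}"
| "ncvars (NConst c) = {}"
| "ncvars (NAdd p q) = ncvars p \<union> ncvars q"
| "ncvars (NMul p q) = ncvars p \<union> ncvars q"

fun nceval :: "(nat \<Rightarrow> real^'n^'n) \<Rightarrow> ncpoly \<Rightarrow> real^'n^'n" where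
  "nceval \<sigma> (NVar i) = \<sigma> i"
| "nceval \<sigma> (NConst c) = of_int c *\<^sub>R mat 1"
| "nceval \<sigma> (NAdd p q) = nceval \<sigma> p + nceval \<sigma> q"
| "nceval \<sigma> (NMul p q) = nceval \<sigma> p ** nceval \<sigma> q"

fun matpow :: "real^'n^'n \<Rightarrow> nat \<Rightarrow> real^'n^'n" where
  "matpow A 0 = mat 1"
| "matpow A (Suc k) = A ** matpow A k"

definition poly_mat :: "int poly \<Rightarrow> real^'n^'n \<Rightarrow> real^'n^'n" where
  "poly_mat P A = (\<Sum>i\<le>degree P. of_int (coeff P i) *\<^sub>R matpow A i)"

definition algebraic_mat :: "real^'n^'n \<Rightarrow> bool" where
  "algebraic_mat A \<longleftrightarrow> (\<exists>P. P \<noteq> 0 \<and> poly_mat P A = 0)"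

definition transcendental_mat :: "real^'n^'n \<Rightarrow> bool" where
  "transcendental_mat A \<longleftrightarrow> \<not> algebraic_mat A"

definition weakly_algebraic :: "real^'n^'n \<Rightarrow> bool" where
  "weakly_algebraic A \<longleftrightarrow>
     (\<exists>(l::nat) P. ncvars P \<subseteq> {..l} \<and>
        (\<forall>\<sigma>::nat \<Rightarrow> real^'n^'n. \<sigma> 0 = A \<longrightarrow> nceval \<sigma> P = 0) \<and>
        (\<exists>\<sigma>::nat \<Rightarrow> real^'n^'n. nceval \<sigma> P \<noteq> 0))"

definition weakly_alg_indep :: "real^'n^'n \<Rightarrow> real^'n^'n \<Rightarrow> bool" where
  "weakly_alg_indep B C \<longleftrightarrow>
     (\<forall>P. ncvars P \<subseteq> {0, 1} \<longrightarrow>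
        nceval ((\<lambda>_. 0)(0 := B, 1 := C)) P = 0 \<longrightarrow>
        (\<forall>C0 C1. nceval ((\<lambda>_. 0)(0 := C0, 1 := C1)) P = (0::real^'n^'n)))"

definition supnorm :: "real^'k \<Rightarrow> real" where
  "supnorm x = Max (range (\<lambda>i. \<bar>x $ i\<bar>))"

definition int_vec :: "real^'k \<Rightarrow> bool" where
  "int_vec x \<longleftrightarrow> (\<forall>i. x $ i \<in> \<int>)"

definition liouville_mat :: "real^'n^'m \<Rightarrow> bool" where
  "liouville_mat A \<longleftrightarrow>
     (\<forall>q p. int_vec q \<and> int_vec p \<and> (q \<noteq> 0 \<or> p \<noteq> 0) \<longrightarrow> A *v q - p \<noteq> 0) \<and>
     (\<forall>N::nat. \<exists>p q. int_vec p \<and> int_vec q \<and> q \<noteq> 0 \<and>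
        supnorm (A *v q - p) < inverse (supnorm q ^ N))"

end

theory Submission
  imports Defs
begin

lemma nceval_cong:
  "(\<And>i. i \<in> ncvars P \<Longrightarrow> \<sigma> i = \<tau> i) \<Longrightarrow> nceval \<sigma> P = nceval \<tau> P"
  by (induction P) auto

fun ncsubst :: "(nat \<Rightarrow> ncpoly) \<Rightarrow> ncpoly \<Rightarrow> ncpoly" where
  "ncsubst \<tau> (NVar i) = \<tau> i"
| "ncsubst \<tau> (NConst c) = NConst c"
| "ncsubst \<tau> (NAdd p q) = NAdd (ncsubst \<tau> p) (ncsubst \<tau> q)"
| "ncsubst \<tau> (NMul p q) = NMul (ncsubst \<tau> p) (ncsubst \<tau> q)"

lemma nceval_subst: "nceval \<sigma> (ncsubst \<tau> P) = nceval (\<lambda>i. nceval \<sigma> (\<tau> i)) P"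
  by (induction P) auto

lemma ncvars_subst: "ncvars (ncsubst \<tau> P) = (\<Union>i\<in>ncvars P. ncvars (\<tau> i))"
  by (induction P) auto

fun npow :: "ncpoly \<Rightarrow> nat \<Rightarrow> ncpoly" where
  "npow e 0 = NConst 1"
| "npow e (Suc k) = NMul e (npow e k)"

lemma nceval_npow: "nceval \<sigma> (npow e k) = matpow (nceval \<sigma> e) k"
  by (induction k) auto

lemma ncvars_npow: "ncvars (npow e k) \<subseteq> ncvars e"
  by (induction k) auto

fun nsum :: "ncpoly list \<Rightarrow> ncpoly" where
  "nsum [] = NConst 0"
| "nsum (x # xs) = NAdd x (nsum xs)"

lemma nceval_nsum: "nceval \<sigma> (nsum xs) = sum_list (map (nceval \<sigma>) xs)"
  by (induction xs) auto

lemma ncvars_nsum: "ncvars (nsum xs) = (\<Union>x\<in>set xs. ncvars x)"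
  by (induction xs) auto

definition polyterm :: "int poly \<Rightarrow> ncpoly \<Rightarrow> ncpoly" where
  "polyterm P e = nsum (map (\<lambda>i. NMul (NConst (coeff P i)) (npow e i)) [0..<Suc (degree P)])"

lemma nceval_polyterm: "nceval \<sigma> (polyterm P e) = poly_mat P (nceval \<sigma> e)"
proof -
  have "nceval \<sigma> (polyterm P e) =
      (\<Sum>i\<leftarrow>[0..<Suc (degree P)]. of_int (coeff P i) *\<^sub>R matpow (nceval \<sigma> e) i)"
    by (simp add: polyterm_def nceval_nsum o_def nceval_npow scalar_matrix_assoc[symmetric])
  also have "\<dots> = (\<Sum>i\<in>set [0..<Suc (degree P)]. of_int (coeff P i) *\<^sub>R matpow (nceval \<sigma> e) i)"
    by (rule sum_set_upt_conv_sum_list_nat[symmetric])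
  also have "set [0..<Suc (degree P)] = {..degree P}" by auto
  finally show ?thesis by (simp add: poly_mat_def)
qed

lemma ncvars_polyterm: "ncvars (polyterm P e) \<subseteq> ncvars e"
  using ncvars_npow by (auto simp: polyterm_def ncvars_nsum)

lemma matpow_scalar: "matpow (c *\<^sub>R mat 1 :: real^'n^'n) i = (c ^ i) *\<^sub>R mat 1"
  by (induction i) (auto simp: scalar_matrix_assoc[symmetric] matrix_scalar_ac)

lemma poly_mat_scalar: "poly_mat P (c *\<^sub>R mat 1 :: real^'n^'n) =
   poly (map_poly real_of_int P) c *\<^sub>R mat 1"
proof -
  have "poly (map_poly real_of_int P) c = (\<Sum>i\<le>degree P. of_int (coeff P i) * c ^ i)"
    by (simp add: poly_altdef degree_map_poly coeff_map_poly)
  then show ?thesis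
    by (simp add: poly_mat_def matpow_scalar scaleR_sum_left)
qed

lemma mat1_nz: "(mat 1 :: real^'n^'n) \<noteq> 0"
proof
  assume "(mat 1 :: real^'n^'n) = 0"
  then have "(mat 1 :: real^'n^'n) $ undefined $ undefined = 0" by simp
  then show False by (simp add: mat_def)
qed

lemma part1:
  fixes A B C :: "real^'n^'n"
  assumes "weakly_alg_indep B C" "A = B + C"
  shows "transcendental_mat A"
  unfolding transcendental_mat_def algebraic_mat_def
proof
  assume "\<exists>P. P \<noteq> 0 \<and> poly_mat P A = 0"
  then obtain P where P: "P \<noteq> 0" "poly_mat P A = 0" by blast
  let ?Q = "polyterm P (NAdd (NVar 0) (NVar 1))"
  have vars: "ncvars ?Q \<subseteq> {0,1}" using ncvars_polyterm[of P "NAdd (NVar 0) (NVar 1)"] by auto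
  have "nceval ((\<lambda>_. 0)(0 := B, 1 := C)) ?Q = 0"
    using P assms by (simp add: nceval_polyterm)
  with assms(1) vars have all: "\<And>C0 C1. nceval ((\<lambda>_. 0)(0 := C0, 1 := C1)) ?Q = (0::real^'n^'n)"
    unfolding weakly_alg_indep_def by blast
  have "poly (map_poly real_of_int P) c = 0" for c
  proof -
    have "poly_mat P (c *\<^sub>R mat 1 + 0 :: real^'n^'n) = 0"
      using all[of "c *\<^sub>R mat 1" 0] by (simp add: nceval_polyterm)
    then have "poly (map_poly real_of_int P) c *\<^sub>R (mat 1 :: real^'n^'n) = 0"
      by (simp add: poly_mat_scalar)
    then show ?thesis using mat1_nz by auto
  qed
  then have "map_poly real_of_int P = 0" using poly_all_0_iff_0 by blast
  then have "P = 0" by (subst (asm) map_poly_eq_0_iff) auto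
  with P show False by simp
qed


lemma matmul_cont:
  fixes f g :: "'a::topological_space \<Rightarrow> real^'n^'n"
  assumes "continuous_on UNIV f" "continuous_on UNIV g"
  shows "continuous_on UNIV (\<lambda>x. f x ** g x)"
  unfolding matrix_matrix_mult_def
  by (intro continuous_on_vec_lambda continuous_intros assms)

lemma nceval_cont:
  fixes \<sigma> :: "'a::topological_space \<Rightarrow> nat \<Rightarrow> real^'n^'n"
  assumes "\<And>i. continuous_on UNIV (\<lambda>x. \<sigma> x i)"
  shows "continuous_on UNIV (\<lambda>x. nceval (\<sigma> x) P)"
  by (induction P) (auto intro!: continuous_intros matmul_cont assms)

lemma nceval_poly:
  fixes M N :: "nat \<Rightarrow> real^'n^'n"
  shows "\<exists>Q. \<forall>t i j. nceval (\<lambda>k. M k + t *\<^sub>R N k) P $ i $ j = poly (Q i j) t"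
proof (induction P)
  case (NVar k)
  show ?case by (rule exI[of _ "\<lambda>i j. [:M k $ i $ j, N k $ i $ j:]"]) auto
next
  case (NConst c)
  show ?case by (rule exI[of _ "\<lambda>i j. [:of_int c * mat 1 $ i $ j:]"]) auto
next
  case (NAdd p q)
  then obtain Q1 Q2 where "\<forall>t i j. nceval (\<lambda>k. M k + t *\<^sub>R N k) p $ i $ j = poly (Q1 i j) t"
    "\<forall>t i j. nceval (\<lambda>k. M k + t *\<^sub>R N k) q $ i $ j = poly (Q2 i j) t" by blast
  then show ?case by (intro exI[of _ "\<lambda>i j. Q1 i j + Q2 i j"]) auto
next
  case (NMul p q)
  then obtain Q1 Q2 where "\<forall>t i j. nceval (\<lambda>k. M k + t *\<^sub>R N k) p $ i $ j = poly (Q1 i j) t"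
    "\<forall>t i j. nceval (\<lambda>k. M k + t *\<^sub>R N k) q $ i $ j = poly (Q2 i j) t" by blast
  then show ?case
    by (intro exI[of _ "\<lambda>i j. \<Sum>k\<in>UNIV. Q1 i k * Q2 k j"])
       (auto simp: matrix_matrix_mult_def poly_sum)
qed

definition FF :: "real^'n^'n \<Rightarrow> ncpoly \<Rightarrow> real^'n^'n \<Rightarrow> real^'n^'n" where
  "FF A P B = nceval ((\<lambda>_. 0)(0 := B, 1 := A - B)) P"

lemma FF_vanish:
  fixes A B0 B1 :: "real^'n^'n"
  assumes e: "e > 0" and van: "\<And>B. B \<in> ball B0 e \<Longrightarrow> FF A P B = 0"
  shows "FF A P B1 = 0"
proof -
  define D where "D = B1 - B0"
  define M :: "nat \<Rightarrow> real^'n^'n" where "M = ((\<lambda>_. 0)(0 := B0, 1 := A - B0))"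
  define N :: "nat \<Rightarrow> real^'n^'n" where "N = ((\<lambda>_. 0)(0 := D, 1 := - D))"
  have sig: "(\<lambda>k. M k + t *\<^sub>R N k) = (\<lambda>_. 0)(0 := B0 + t *\<^sub>R D, 1 := A - (B0 + t *\<^sub>R D))" for t
    by (rule ext) (auto simp: M_def N_def)
  obtain Q where Q: "\<And>t i j. nceval (\<lambda>k. M k + t *\<^sub>R N k) P $ i $ j = poly (Q i j) t"
    using nceval_poly by blast
  define d where "d = e / (norm D + 1)"
  have "norm D + 1 > 0" by (simp add: add_nonneg_pos)
  then have d: "d > 0" using e by (simp add: d_def)
  have zero: "poly (Q i j) t = 0" if "t \<in> {-d<..<d}" for t i j
  proof -
    have "norm (t *\<^sub>R D) = \<bar>t\<bar> * norm D" by simp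
    also have "\<dots> \<le> d * norm D" using that by (intro mult_right_mono) auto
    also have "\<dots> < e"
    proof -
      have pos: "norm D + 1 > 0" by (simp add: add_nonneg_pos)
      have "e * norm D < e * (norm D + 1)" using e by simp
      then have "e * norm D / (norm D + 1) < e" using pos by (simp add: pos_divide_less_eq)
      then show ?thesis by (simp add: d_def)
    qed
    finally have "B0 + t *\<^sub>R D \<in> ball B0 e" by (simp add: dist_norm)
    then have "FF A P (B0 + t *\<^sub>R D) = 0" by (rule van)
    then show ?thesis using Q[of t i j] by (simp add: sig FF_def)
  qed
  have "Q i j = 0" for i j
  proof (rule ccontr)
    assume "Q i j \<noteq> 0"
    then have "finite {t. poly (Q i j) t = 0}" by (rule poly_roots_finite)
    moreover have "{-d<..<d} \<subseteq> {t. poly (Q i j) t = 0}" using zero by auto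
    ultimately have "finite {-d<..<d}" by (rule finite_subset[rotated])
    moreover have "infinite {-d<..<d}" using d by (intro infinite_Ioo) simp
    ultimately show False by simp
  qed
  then have "nceval (\<lambda>k. M k + 1 *\<^sub>R N k) P $ i $ j = 0" for i j
    using Q[of 1 i j] by (simp del: scaleR_one)
  moreover have "(\<lambda>k. M k + 1 *\<^sub>R N k) = (\<lambda>_. 0)(0 := B1, 1 := A - B1)"
    by (simp only: sig) (simp add: D_def)
  ultimately show ?thesis by (simp add: FF_def vec_eq_iff del: scaleR_one)
qed

lemma negmat: "(- mat 1 :: real^'n^'n) ** X = - X"
proof -
  have "(- mat 1 :: real^'n^'n) = (-1::real) *\<^sub>R mat 1" by simp
  then have "(- mat 1 :: real^'n^'n) ** X = (-1::real) *\<^sub>R (mat 1 ** X)"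
    by (simp only: scalar_matrix_assoc)
  then show ?thesis by (simp only: matrix_mul_lid) simp
qed

lemma negmat2: "(of_int (-1) *\<^sub>R mat 1 :: real^'n^'n) ** X = - X"
  by (simp only: scalar_matrix_assoc[symmetric] matrix_mul_lid) simp

lemma notall:
  fixes A C0 C1 :: "real^'n^'n"
  assumes "\<not> weakly_algebraic A" "ncvars P \<subseteq> {0,1}"
    "nceval ((\<lambda>_. 0)(0 := C0, 1 := C1)) P \<noteq> 0"
  shows "\<exists>B. FF A P B \<noteq> 0"
proof (rule ccontr)
  assume "\<not> ?thesis"
  then have F0: "\<And>B. FF A P B = 0" by blast
  define \<tau> :: "nat \<Rightarrow> ncpoly" where "\<tau> = (\<lambda>_. NVar 0)(0 := NVar 1, 1 := NAdd (NVar 0) (NMul (NConst (-1)) (NVar 1)))"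
  define Q where "Q = ncsubst \<tau> P"
  have t0: "\<tau> 0 = NVar 1" by (simp add: \<tau>_def)
  have t1: "\<tau> 1 = NAdd (NVar 0) (NMul (NConst (-1)) (NVar 1))" by (simp add: \<tau>_def)
  have ev1: "nceval s (\<tau> 1) = s 0 - s 1" for s :: "nat \<Rightarrow> real^'n^'n"
  proof -
    have "nceval s (\<tau> 1) = s 0 + (of_int (-1) *\<^sub>R mat 1) ** s 1"
      by (simp only: t1 nceval.simps)
    then show ?thesis by (simp only: negmat2) simp
  qed
  have "ncvars Q \<subseteq> {..1}" using assms(2) by (auto simp: Q_def ncvars_subst \<tau>_def)
  moreover have "nceval \<sigma> Q = 0" if "\<sigma> 0 = A" for \<sigma> :: "nat \<Rightarrow> real^'n^'n"
  proof -
    have "nceval \<sigma> Q = nceval (\<lambda>i. nceval \<sigma> (\<tau> i)) P" by (simp add: Q_def nceval_subst)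
    also have "\<dots> = nceval ((\<lambda>_. 0)(0 := \<sigma> 1, 1 := A - \<sigma> 1)) P"
    proof (intro nceval_cong)
      fix i assume "i \<in> ncvars P"
      then have "i = 0 \<or> i = 1" using assms(2) by auto
      then show "nceval \<sigma> (\<tau> i) = ((\<lambda>_. 0)(0 := \<sigma> 1, 1 := A - \<sigma> 1)) i"
        using that by (elim disjE) (simp_all only: t0 ev1 nceval.simps, simp_all)
    qed
    finally show ?thesis using F0 by (simp add: FF_def)
  qed
  moreover have "nceval ((\<lambda>_. 0)(0 := C0 + C1, 1 := C0)) Q \<noteq> 0"
  proof -
    have "nceval ((\<lambda>_. 0)(0 := C0 + C1, 1 := C0)) Q
        = nceval (\<lambda>i. nceval ((\<lambda>_. 0)(0 := C0 + C1, 1 := C0)) (\<tau> i)) P"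
      by (simp add: Q_def nceval_subst)
    also have "\<dots> = nceval ((\<lambda>_. 0)(0 := C0, 1 := C1)) P"
    proof (intro nceval_cong)
      fix i assume "i \<in> ncvars P"
      then have "i = 0 \<or> i = 1" using assms(2) by auto
      then show "nceval ((\<lambda>_. 0)(0 := C0 + C1, 1 := C0)) (\<tau> i) = ((\<lambda>_. 0)(0 := C0, 1 := C1)) i"
        using ev1[of "(\<lambda>_. 0)(0 := C0 + C1, 1 := C0)"] by (elim disjE) (simp_all add: t0)
    qed
    finally show ?thesis using assms(3) by simp
  qed
  ultimately have "weakly_algebraic A" unfolding weakly_algebraic_def by blast
  with assms(1) show False by simp
qed


instance ncpoly :: countable by countable_datatype

definition rv :: "int^'k \<Rightarrow> real^'k" where "rv z = (\<chi> i. of_int (z $ i))"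

lemma rv_nth [simp]: "rv z $ i = of_int (z $ i)" by (simp add: rv_def)

lemma int_vec_rv: "int_vec (rv z)" by (simp add: int_vec_def)

lemma int_vec_ex: "int_vec q \<Longrightarrow> \<exists>z. q = rv z"
proof -
  assume "int_vec q"
  then have "\<forall>i. \<exists>z. q $ i = of_int z" unfolding int_vec_def by (metis Ints_cases)
  then obtain f where "\<And>i. q $ i = of_int (f i)" by metis
  then have "q = rv (\<chi> i. f i)" by (simp add: vec_eq_iff)
  then show ?thesis by blast
qed

lemma rv_0 [simp]: "rv 0 = 0" by (simp add: vec_eq_iff)

lemma rv_eq0: "rv z = 0 \<longleftrightarrow> z = 0" by (simp add: vec_eq_iff)

lemma supnorm_less: "supnorm (x::real^'k) < c \<longleftrightarrow> (\<forall>i. \<bar>x $ i\<bar> < c)"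
  by (simp add: supnorm_def)

lemma supnorm_ge: "\<bar>x $ i\<bar> \<le> supnorm (x::real^'k)"
  unfolding supnorm_def by (rule Max_ge) auto

lemma supnorm_0: "supnorm (0::real^'k) = 0"
  by (simp add: supnorm_def)

definition adense :: "'a::metric_space set \<Rightarrow> bool" where
  "adense T \<longleftrightarrow> (\<forall>x e. e > 0 \<longrightarrow> (\<exists>y\<in>T. dist y x < e))"

lemma adense_closure: "adense T \<Longrightarrow> closure T = UNIV"
  by (auto simp: adense_def closure_approachable)

lemma cont_mv: "continuous_on UNIV (\<lambda>B::real^'n^'m. B *v v)"
  unfolding matrix_vector_mult_def
  by (intro continuous_on_vec_lambda continuous_intros)

definition UL :: "nat \<Rightarrow> (real^'n^'n) set" where
  "UL N = {B. \<exists>zp zq. zq \<noteq> 0 \<and> supnorm (B *v rv zq - rv zp) < inverse (supnorm (rv zq) ^ N)}"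

lemma open_UL: "open (UL N)"
proof -
  have eq: "UL N = (\<Union>zp. \<Union>zq\<in>{zq. zq \<noteq> 0}. \<Inter>i. {B. \<bar>(B *v rv zq - rv zp) $ i\<bar> < inverse (supnorm (rv zq) ^ N)})"
    by (auto simp: UL_def supnorm_less)
  have op: "open {B::real^'n^'n. \<bar>(B *v rv zq - rv zp) $ i\<bar> < c}" for zq zp i c
    by (intro open_Collect_less continuous_intros cont_mv)
  show ?thesis
    by (subst eq) (intro open_UN ballI open_INT op, auto)
qed

lemma adense_UL: "adense (UL N :: (real^'n^'n) set)"
  unfolding adense_def
proof (intro allI impI)
  fix B0 :: "real^'n^'n" and e :: real
  assume e: "e > 0"
  define c where "c = real (CARD('n))"
  obtain n :: nat where n: "c * c / e < real n" using reals_Archimedean2 by blast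
  define k where "k = Suc n"
  have kpos: "real k > 0" by (simp add: k_def)
  have ck: "c * c / real k < e"
  proof -
    have "c * c < e * real n" using n e by (simp add: pos_divide_less_eq mult.commute)
    also have "\<dots> \<le> e * real k" using e by (simp add: k_def)
    finally show ?thesis using kpos by (simp add: pos_divide_less_eq mult.commute)
  qed
  define j0 where "j0 = (undefined :: 'n)"
  define B :: "real^'n^'n" where
    "B = (\<chi> i j. if j = j0 then of_int (round (real k * B0 $ i $ j)) / real k else B0 $ i $ j)"
  define zq :: "int^'n" where "zq = (\<chi> j. if j = j0 then int k else 0)"
  define zp :: "int^'n" where "zp = (\<chi> i. round (real k * B0 $ i $ j0))"
  have zq0: "zq \<noteq> 0"
  proof
    assume "zq = 0"
    then have "zq $ j0 = 0" by simp
    then show False by (simp add: zq_def k_def)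
  qed
  have "B *v rv zq = rv zp"
    unfolding vec_eq_iff
  proof (intro allI)
    fix i
    have "(B *v rv zq) $ i = (\<Sum>j\<in>UNIV. B $ i $ j * rv zq $ j)"
      by (simp add: matrix_vector_mult_def)
    also have "\<dots> = (\<Sum>j\<in>UNIV. if j = j0 then B $ i $ j0 * real k else 0)"
      by (intro sum.cong) (auto simp: zq_def)
    also have "\<dots> = B $ i $ j0 * real k" by simp
    also have "\<dots> = rv zp $ i" using kpos by (simp add: B_def zp_def)
    finally show "(B *v rv zq) $ i = rv zp $ i" .
  qed
  moreover have "supnorm (rv zq) > 0"
  proof -
    have "\<bar>rv zq $ j0\<bar> = real k" by (simp add: zq_def)
    then show ?thesis using supnorm_ge[of "rv zq" j0] kpos by linarith
  qed
  ultimately have "B \<in> UL N" unfolding UL_def using zq0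
    by (intro CollectI exI[of _ zp] exI[of _ zq]) (simp add: supnorm_0)
  moreover have "dist B B0 < e"
  proof -
    have comp: "\<bar>(B - B0) $ i $ j\<bar> \<le> 1 / real k" for i j
    proof (cases "j = j0")
      case True
      have "(B - B0) $ i $ j = (of_int (round (real k * B0 $ i $ j)) - real k * B0 $ i $ j) / real k"
        using True kpos by (simp add: B_def field_simps)
      then have "\<bar>(B - B0) $ i $ j\<bar> = \<bar>of_int (round (real k * B0 $ i $ j)) - real k * B0 $ i $ j\<bar> / real k"
        using kpos by simp
      also have "\<dots> \<le> (1/2) / real k" using kpos
        by (intro divide_right_mono of_int_round_abs_le) auto
      also have "\<dots> \<le> 1 / real k" using kpos by (intro divide_right_mono) auto
      finally show ?thesis .
    next
      case False
      then show ?thesis using kpos by (simp add: B_def)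
    qed
    have "norm (B - B0) \<le> (\<Sum>i\<in>UNIV. norm ((B - B0) $ i))"
      by (simp add: norm_vec_def L2_set_le_sum)
    also have "\<dots> \<le> (\<Sum>i\<in>(UNIV::'n set). \<Sum>j\<in>(UNIV::'n set). \<bar>(B - B0) $ i $ j\<bar>)"
      by (intro sum_mono norm_le_l1_cart)
    also have "\<dots> \<le> (\<Sum>i\<in>(UNIV::'n set). \<Sum>j\<in>(UNIV::'n set). 1 / real k)"
      by (intro sum_mono comp)
    also have "\<dots> = c * c / real k" by (simp add: c_def)
    finally show ?thesis using ck by (simp add: dist_norm)
  qed
  ultimately show "\<exists>y\<in>UL N. dist y B0 < e" by blast
qed

definition VL :: "(int^'n) \<times> (int^'n) \<Rightarrow> (real^'n^'n) set" where
  "VL z = (if fst z = 0 \<and> snd z = 0 then UNIV else {B. B *v rv (fst z) - rv (snd z) \<noteq> 0})"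

lemma open_VL: "open (VL z)"
  unfolding VL_def by (auto intro!: open_Collect_neq continuous_intros cont_mv)

lemma adense_VL:
  fixes z :: "(int^'n) \<times> (int^'n)"
  shows "adense (VL z)"
proof (cases "fst z = 0")
  case True
  have "B *v rv (fst z) - rv (snd z) \<noteq> 0" if "snd z \<noteq> 0" for B :: "real^'n^'n"
  proof -
    have "B *v rv (fst z) - rv (snd z) = - rv (snd z)" using True by simp
    moreover have "rv (snd z) \<noteq> 0" using that rv_eq0 by blast
    ultimately show ?thesis by simp
  qed
  then have W: "VL z = UNIV" using True by (auto simp: VL_def)
  show ?thesis unfolding adense_def using W by (metis UNIV_I dist_self)
next
  case False
  let ?q = "rv (fst z)" and ?p = "rv (snd z)"
  have q0: "?q \<noteq> 0" using False by (simp add: rv_eq0)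
  show ?thesis unfolding adense_def
  proof (intro allI impI)
    fix x :: "real^'n^'n" and e :: real
    assume e: "e > 0"
    show "\<exists>y\<in>VL z. dist y x < e"
    proof (cases "x *v ?q - ?p = 0")
      case False
      then have "x \<in> VL z" by (simp add: VL_def)
      then show ?thesis using e by force
    next
      case True
      define t where "t = e / (2 * (norm (mat 1 :: real^'n^'n) + 1))"
      have pos: "2 * (norm (mat 1 :: real^'n^'n) + 1) > 0" by (simp add: add_nonneg_pos)
      have t: "t > 0" using e pos by (simp add: t_def)
      have "(x + t *\<^sub>R mat 1) *v ?q - ?p = t *\<^sub>R ?q"
        using True by (simp add: matrix_vector_mult_add_rdistrib scaleR_matrix_vector_assoc[symmetric] algebra_simps)
      then have ne: "(x + t *\<^sub>R mat 1) *v ?q \<noteq> ?p" using t q0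
        by (metis eq_iff_diff_eq_0 scaleR_eq_0_iff less_irrefl)
      then have "x + t *\<^sub>R mat 1 \<in> VL z" by (simp add: VL_def)
      moreover have "dist (x + t *\<^sub>R mat 1) x < e"
      proof -
        have "dist (x + t *\<^sub>R mat 1) x = t * norm (mat 1 :: real^'n^'n)"
          using t by (simp add: dist_norm)
        also have "\<dots> < e"
        proof -
          have "e * norm (mat 1 :: real^'n^'n) < e * (2 * (norm (mat 1 :: real^'n^'n) + 1))"
            using e by (intro mult_strict_left_mono) (auto simp: add_nonneg_pos)
          then show ?thesis using pos by (simp add: t_def pos_divide_less_eq)
        qed
        finally show ?thesis .
      qed
      ultimately show ?thesis by blast
    qed
  qed
qed

definition WL :: "real^'n^'n \<Rightarrow> ncpoly \<Rightarrow> (real^'n^'n) set" where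
  "WL A P = (if ncvars P \<subseteq> {0,1} \<and> (\<exists>C0 C1. nceval ((\<lambda>_. 0)(0 := C0, 1 := C1)) P \<noteq> (0::real^'n^'n))
     then {B. FF A P B \<noteq> 0} else UNIV)"

lemma FF_cont: "continuous_on UNIV (FF A P)"
  unfolding FF_def
proof (intro nceval_cont)
  fix i
  show "continuous_on UNIV (\<lambda>x. ((\<lambda>_. 0)(0 := x, 1 := A - x)) i)"
    by (cases "i = 0"; cases "i = 1") (auto intro!: continuous_intros)
qed

lemma open_WL: "open (WL A P)"
  unfolding WL_def by (auto intro!: open_Collect_neq FF_cont continuous_intros)

lemma adense_WL:
  fixes A :: "real^'n^'n"
  assumes "\<not> weakly_algebraic A"
  shows "adense (WL A P)"
proof (cases "ncvars P \<subseteq> {0,1} \<and> (\<exists>C0 C1. nceval ((\<lambda>_. 0)(0 := C0, 1 := C1)) P \<noteq> (0::real^'n^'n))")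
  case False
  have W: "WL A P = UNIV" unfolding WL_def by (rule if_not_P[OF False])
  show ?thesis unfolding adense_def using W by (metis UNIV_I dist_self)
next
  case True
  then obtain C0 C1 :: "real^'n^'n" where "ncvars P \<subseteq> {0,1}" "nceval ((\<lambda>_. 0)(0 := C0, 1 := C1)) P \<noteq> 0"
    by blast
  from notall[OF assms this] obtain B1 where B1: "FF A P B1 \<noteq> 0" by blast
  have W: "WL A P = {B. FF A P B \<noteq> 0}" unfolding WL_def by (rule if_P[OF True])
  show ?thesis unfolding adense_def
  proof (intro allI impI)
    fix x :: "real^'n^'n" and e :: real
    assume e: "e > 0"
    show "\<exists>y\<in>WL A P. dist y x < e"
    proof (rule ccontr)
      assume "\<not> ?thesis"
      then have "\<And>B. B \<in> ball x e \<Longrightarrow> FF A P B = 0"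
        by (auto simp: W dist_commute)
      from FF_vanish[OF e this] B1 show False by blast
    qed
  qed
qed

definition RL :: "real^'n^'n \<Rightarrow> (real^'n^'n) set \<Rightarrow> (real^'n^'n) set" where
  "RL A S = {B. A - B \<in> S}"

lemma open_RL: "open S \<Longrightarrow> open (RL A S)"
proof -
  assume "open S"
  have "RL A S = (\<lambda>B. A - B) -` S" by (auto simp: RL_def)
  moreover have "open ((\<lambda>B. A - B) -` S)"
    using \<open>open S\<close> by (intro continuous_open_vimage) (auto intro!: continuous_intros)
  ultimately show ?thesis by simp
qed

lemma adense_RL: "adense S \<Longrightarrow> adense (RL A S)"
  unfolding adense_def RL_def
proof (intro allI impI)
  fix x e assume S: "\<forall>x e. 0 < e \<longrightarrow> (\<exists>y\<in>S. dist y x < e)" and e: "(e::real) > 0"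
  then obtain y where "y \<in> S" "dist y (A - x) < e" by blast
  then show "\<exists>y\<in>{B. A - B \<in> S}. dist y x < e"
    by (intro bexI[of _ "A - y"]) (auto simp: dist_norm norm_minus_commute algebra_simps)
qed


lemma part2:
  fixes A :: "real^'n^'n"
  assumes nwa: "\<not> weakly_algebraic A"
  shows "\<exists>B C. weakly_alg_indep B C \<and> liouville_mat B \<and> liouville_mat C \<and> B + C = A"
proof -
  define G where "G = range (UL :: nat \<Rightarrow> (real^'n^'n) set) \<union> range (VL :: (int^'n) \<times> (int^'n) \<Rightarrow> _)
     \<union> range (WL A) \<union> RL A ` (range (UL :: nat \<Rightarrow> (real^'n^'n) set) \<union> range (VL :: (int^'n) \<times> (int^'n) \<Rightarrow> _))"
  have cG: "countable G" unfolding G_def by auto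
  have oG: "open T \<and> adense T" if "T \<in> G" for T
    using that unfolding G_def
    by (auto intro!: open_UL adense_UL open_VL adense_VL open_WL adense_WL[OF nwa] open_RL adense_RL)
  have "(UNIV :: (real^'n^'n) set) \<subseteq> closure (\<Inter>G)"
  proof (rule Baire[OF closed_UNIV cG])
    fix T assume "T \<in> G"
    then have "open T" "adense T" using oG by auto
    then show "openin (top_of_set UNIV) T \<and> UNIV \<subseteq> closure T"
      by (simp add: adense_closure)
  qed
  then have "\<Inter>G \<noteq> {}" by auto
  then obtain B where B: "B \<in> \<Inter>G" by blast
  have BU: "B \<in> UL N" for N using B by (auto simp: G_def)
  have BV: "B \<in> VL z" for z using B by (auto simp: G_def)
  have BW: "B \<in> WL A P" for P using B by (auto simp: G_def)
  have CU: "A - B \<in> UL N" for N using B by (auto simp: G_def RL_def)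
  have CV: "A - B \<in> VL z" for z using B by (auto simp: G_def RL_def)
  have liou: "liouville_mat M" if MU: "\<And>N. M \<in> UL N" and MV: "\<And>z. M \<in> VL z" for M :: "real^'n^'n"
    unfolding liouville_mat_def
  proof (intro conjI allI impI)
    fix q p :: "real^'n"
    assume h: "int_vec q \<and> int_vec p \<and> (q \<noteq> 0 \<or> p \<noteq> 0)"
    then obtain zq zp where zq: "q = rv zq" and zp: "p = rv zp" using int_vec_ex by metis
    have "\<not> (zq = 0 \<and> zp = 0)" using h zq zp by auto
    then have "VL (zq, zp) = {B. B *v rv zq - rv zp \<noteq> 0}" unfolding VL_def
      by (subst if_not_P) auto
    then show "M *v q - p \<noteq> 0" using MV[of "(zq, zp)"] zq zp by simp
  next
    fix N :: nat
    obtain zp zq where "zq \<noteq> 0" "supnorm (M *v rv zq - rv zp) < inverse (supnorm (rv zq) ^ N)"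
      using MU[of N] by (auto simp: UL_def)
    then show "\<exists>p q. int_vec p \<and> int_vec q \<and> q \<noteq> 0 \<and> supnorm (M *v q - p) < inverse (supnorm q ^ N)"
      by (intro exI[of _ "rv zp"] exI[of _ "rv zq"]) (simp add: int_vec_rv rv_eq0)
  qed
  have indep: "weakly_alg_indep B (A - B)"
    unfolding weakly_alg_indep_def
  proof (intro allI impI)
    fix P C0 C1
    assume vars: "ncvars P \<subseteq> {0, 1}" and z: "nceval ((\<lambda>_. 0)(0 := B, 1 := A - B)) P = 0"
    show "nceval ((\<lambda>_. 0)(0 := C0, 1 := C1)) P = (0::real^'n^'n)"
    proof (rule ccontr)
      assume "\<not> ?thesis"
      then have "WL A P = {B. FF A P B \<noteq> 0}" using vars unfolding WL_def by (intro if_P) blast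
      with BW[of P] z show False by (simp add: FF_def)
    qed
  qed
  show ?thesis
    by (intro exI[of _ B] exI[of _ "A - B"] conjI indep liou BU BV CU CV) simp
qed

theorem theorem7:
  fixes A :: "real^'n^'n"
  shows "((\<exists>B C. weakly_alg_indep B C \<and> A = B + C) \<longrightarrow> transcendental_mat A) \<and>
         (\<not> weakly_algebraic A \<longrightarrow>
            (\<exists>B C. weakly_alg_indep B C \<and> liouville_mat B \<and> liouville_mat C \<and> B + C = A))"
  using part1 part2 by blast

end
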